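(* Let $\lambda$ be the unique solution in $(0,1)$ of $\frac{x}{1-x}=\ln\frac1x$. For the objective of maximizing the probability of accepting the box with the (strictly) largest value, no deterministic order-unaware algorithm has order competitive ratio better than $\ln\frac1\lambda\approx0.806$: for every deterministic order-unaware algorithm $\textsf{ALG}$ and every $\delta>0$ there exist an instance and an arrival order $\pi$ with $\textsf{ALG}(\pi)\le\left(\ln\frac1\lambda+\delta\right)\textsf{OPT}(\pi)$.
   Context: Setting (max-probability objective): boxes contain independent nonnegative values $v_i\sim F_i$ with known distributions; boxes arrive one at a time in an arrival order $\pi$; upon arrival a box's identity and realized value are revealed and an online algorithm must immediately and irrevocably accept it (and stop) or reject it forever. The algorithm wins if the box it accepts has value strictly greater than $0$ and strictly greater than the values of all other boxes. A deterministic order-unaware algorithm's decision at each step is a deterministic function only of the distributions and the identities and realized values of the boxes arrived so far; an order-aware algorithm additionally knows $\pi$. $\textsf{ALG}(\pi)$ is the winning probability of $\textsf{ALG}$ under $\pi$, and $\textsf{OPT}(\pi)$ the maximum winning probability over order-aware online algorithms under $\pi$. *)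

theory Defs
  imports "HOL-Probability.Product_PMF"
begin

text \<open>A history is the list of (identity, realized value) of the boxes arrived so far
  (including the current one as last element).\<close>

definition valid_instance :: "nat \<Rightarrow> (nat \<Rightarrow> real pmf) \<Rightarrow> bool" where
  "valid_instance n F \<longleftrightarrow> (\<forall>i<n. set_pmf (F i) \<subseteq> {0..})"

definition arrival_order :: "nat \<Rightarrow> nat list \<Rightarrow> bool" where
  "arrival_order n \<pi> \<longleftrightarrow> distinct \<pi> \<and> set \<pi> = {0..<n}"

fun run :: "((nat \<times> real) list \<Rightarrow> bool) \<Rightarrow> (nat \<times> real) list \<Rightarrow> nat list
            \<Rightarrow> (nat \<Rightarrow> real) \<Rightarrow> nat option" where
  "run d h [] v = None"
| "run d h (j # js) v =
     (let h' = h @ [(j, v j)] in if d h' then Some j else run d h' js v)"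

definition wins :: "nat \<Rightarrow> (nat \<Rightarrow> real) \<Rightarrow> nat option \<Rightarrow> bool" where
  "wins n v r \<longleftrightarrow> (case r of None \<Rightarrow> False
     | Some i \<Rightarrow> v i > 0 \<and> (\<forall>j\<in>{0..<n}. j \<noteq> i \<longrightarrow> v j < v i))"

definition win_prob :: "nat \<Rightarrow> (nat \<Rightarrow> real pmf) \<Rightarrow> nat list
                        \<Rightarrow> ((nat \<times> real) list \<Rightarrow> bool) \<Rightarrow> real" where
  "win_prob n F \<pi> d = measure_pmf.prob (Pi_pmf {0..<n} 0 F) {v. wins n v (run d [] \<pi> v)}"

text \<open>OPT(\<pi>): best winning probability over order-aware algorithms. For a fixed instance
  and order, an order-aware deterministic algorithm is just an arbitrary decision rule on
  histories.\<close>
definition OPT :: "nat \<Rightarrow> (nat \<Rightarrow> real pmf) \<Rightarrow> nat list \<Rightarrow> real" where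
  "OPT n F \<pi> = Sup {win_prob n F \<pi> d | d. True}"

text \<open>A deterministic order-unaware algorithm: a decision depending only on the
  instance (n and the distributions) and the history.\<close>
type_synonym unaware_alg = "nat \<Rightarrow> (nat \<Rightarrow> real pmf) \<Rightarrow> (nat \<times> real) list \<Rightarrow> bool"

definition ALG :: "unaware_alg \<Rightarrow> nat \<Rightarrow> (nat \<Rightarrow> real pmf) \<Rightarrow> nat list \<Rightarrow> real" where
  "ALG A n F \<pi> = win_prob n F \<pi> (A n F)"

definition lam :: real where
  "lam = (THE x. 0 < x \<and> x < 1 \<and> x / (1 - x) = ln (1 / x))"

end

theory Submission
  imports Defs
begin


lemma lam_facts: "0 < lam \<and> lam < 1/2 \<and> lam / (1 - lam) = ln (1 / lam)"
proof -
  define f where "f x = x / (1 - x) - ln (1 / x)" for x :: real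
  have mono: "f x < f y" if "0 < x" "x < y" "y < 1" for x y
  proof -
    have "x / (1 - x) < y / (1 - y)" using that by (simp add: field_simps)
    moreover have "ln (1/y) < ln (1/x)" using that by (simp add: ln_div)
    ultimately show ?thesis unfolding f_def by linarith
  qed
  have "exp 1 < (8::real)" using exp_le by simp
  hence "1 < ln (8::real)" using ln_less_cancel_iff[of "exp 1" 8] by simp
  hence fa: "f (1/8) \<le> 0" unfolding f_def by simp
  have fb: "0 \<le> f (1/2)" unfolding f_def using ln_2_less_1 by simp
  have cont: "continuous_on {1/8..1/2} f" unfolding f_def
    by (intro continuous_intros) auto
  obtain x0 where x0: "1/8 \<le> x0" "x0 \<le> 1/2" "f x0 = 0"
    using IVT'[of f "1/8" 0 "1/2", OF fa fb _ cont] by auto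
  have fb': "0 < f (1/2)" unfolding f_def using ln_2_less_1 by simp
  have x0l: "x0 < 1/2" using x0 fb' by (cases "x0 = 1/2") auto
  have eq: "x / (1 - x) = ln (1 / x) \<longleftrightarrow> f x = 0" for x :: real unfolding f_def by simp
  have uniq: "\<exists>!x::real. 0 < x \<and> x < 1 \<and> x / (1 - x) = ln (1 / x)"
  proof (rule ex1I[where a=x0])
    show "0 < x0 \<and> x0 < 1 \<and> x0 / (1 - x0) = ln (1 / x0)" using x0 x0l eq by auto
  next
    fix y :: real assume y: "0 < y \<and> y < 1 \<and> y / (1 - y) = ln (1 / y)"
    hence fy: "f y = 0" using eq by auto
    show "y = x0"
    proof (rule ccontr)
      assume "y \<noteq> x0"
      hence "y < x0 \<or> x0 < y" by auto
      thus False using mono[of y x0] mono[of x0 y] y x0 x0l fy by auto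
    qed
  qed
  have "lam = x0" unfolding lam_def
    by (rule the1_equality[OF uniq]) (use x0 x0l eq in auto)
  thus ?thesis using x0 x0l eq by auto
qed



lemma peel:
  fixes F :: "nat \<Rightarrow> real pmf"
  assumes "finite A" "k \<notin> A" "0 \<le> p" "p \<le> 1"
    and Fk: "F k = map_pmf (\<lambda>b. if b then a else b0) (bernoulli_pmf p)"
  shows "measure_pmf.prob (Pi_pmf (insert k A) 0 F) S =
     p * measure_pmf.prob (Pi_pmf A 0 F) {f. f(k:=a) \<in> S}
     + (1-p) * measure_pmf.prob (Pi_pmf A 0 F) {f. f(k:=b0) \<in> S}"
proof -
  let ?Q = "Pi_pmf A 0 F"
  define N where "N x = map_pmf (\<lambda>f. f(k := (if x then a else b0))) ?Q" for x
  have eq: "Pi_pmf (insert k A) 0 F = bind_pmf (bernoulli_pmf p) N"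
    using assms(1,2) unfolding N_def
    by (simp add: Pi_pmf_insert' Fk map_pmf_def bind_assoc_pmf bind_return_pmf)
  have mN: "measure_pmf.prob (N x) S = measure_pmf.prob ?Q {f. f(k:=(if x then a else b0)) \<in> S}" for x
    unfolding N_def by (simp add: vimage_def)
  have "ennreal (measure_pmf.prob (Pi_pmf (insert k A) 0 F) S) = emeasure (bind_pmf (bernoulli_pmf p) N) S"
    by (simp add: eq measure_pmf.emeasure_eq_measure)
  also have "\<dots> = (\<integral>\<^sup>+x. emeasure (N x) S \<partial>bernoulli_pmf p)" by simp
  also have "\<dots> = emeasure (N True) S * ennreal p + emeasure (N False) S * ennreal (1 - p)"
    using assms by (subst nn_integral_bernoulli_pmf) auto
  also have "\<dots> = ennreal (measure_pmf.prob (N True) S * p + measure_pmf.prob (N False) S * (1 - p))"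
    using assms by (simp add: measure_pmf.emeasure_eq_measure ennreal_mult ennreal_plus)
  finally have "measure_pmf.prob (Pi_pmf (insert k A) 0 F) S
      = measure_pmf.prob (N True) S * p + measure_pmf.prob (N False) S * (1 - p)"
    using assms by (subst (asm) ennreal_inj) auto
  thus ?thesis using mN[of True] mN[of False] by (simp add: mult.commute)
qed



definition Fi :: "real \<Rightarrow> nat \<Rightarrow> real pmf" where
  "Fi p k = (if k = 0 then return_pmf 1 else map_pmf (\<lambda>b. if b then real k + 1 else 0) (bernoulli_pmf p))"

definition mg :: "(nat \<Rightarrow> real) \<Rightarrow> nat \<Rightarrow> (nat \<Rightarrow> real) \<Rightarrow> nat \<Rightarrow> real" where
  "mg u k f = (\<lambda>i. if i < k then u i else f i)"

lemma mg_upd: "mg u k (f(k:=y)) = mg (u(k:=y)) (Suc k) f"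
  by (auto simp: mg_def fun_eq_iff)

lemma Fi_pos: "k \<noteq> 0 \<Longrightarrow> Fi p k = map_pmf (\<lambda>b. if b then real k + 1 else 0) (bernoulli_pmf p)"
  by (simp add: Fi_def)

lemma allbelow:
  assumes "0 \<le> p" "p \<le> 1" "1 \<le> a" "0 < t" "t \<le> real a + 1"
  shows "measure_pmf.prob (Pi_pmf {a..<n} 0 (Fi p)) {f. \<forall>j\<in>{a..<n}. f j < t} = (1-p)^(n-a)"
proof -
  have set: "{f. \<forall>j\<in>{a..<n}. f j < t} = Pi {a..<n} (\<lambda>_. {x. x < t})" by (auto simp: Pi_def)
  have one: "measure_pmf.prob (Fi p j) {x. x < t} = 1 - p" if "j \<in> {a..<n}" for j
  proof -
    have j0: "j \<noteq> 0" using that assms by auto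
    have pre: "(\<lambda>b. if b then real j + 1 else 0) -` {x. x < t} = {False}"
      using that assms by (auto split: if_splits)
    have "measure_pmf.prob (Fi p j) {x. x < t} = measure_pmf.prob (bernoulli_pmf p) {False}"
      using j0 pre by (simp add: Fi_pos)
    also have "\<dots> = 1 - p" using assms by (simp add: measure_pmf_single)
    finally show ?thesis .
  qed
  show ?thesis unfolding set
    by (simp add: measure_Pi_pmf_Pi one)
qed

lemma odds:
  assumes p: "0 \<le> p" "p \<le> 1" and mp: "real m * p \<le> 1 - p"
  shows "j + k = Suc m \<Longrightarrow> 1 \<le> k \<Longrightarrow>
    measure_pmf.prob (Pi_pmf {k..<Suc m} 0 (Fi p))
      {f. wins (Suc m) (mg u k f) (run d h [k..<Suc m] (mg u k f))} \<le> real j * p * (1-p)^(j-1)"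
proof (induction j arbitrary: k u h)
  case 0
  hence "k = Suc m" by simp
  thus ?case by (simp add: wins_def)
next
  case (Suc j)
  let ?n = "Suc m"
  have kn: "k < ?n" using Suc.prems by simp
  have k0: "k \<noteq> 0" using Suc.prems by simp
  have jm: "j \<le> m" using Suc.prems by simp
  define B where "B = real j * p * (1-p)^(j-1)"
  have B0: "0 \<le> B" using p unfolding B_def by simp
  have Bl: "B \<le> (1-p)^j"
  proof (cases j)
    case 0 thus ?thesis by (simp add: B_def)
  next
    case (Suc j')
    have "real j * p \<le> real m * p" using jm p by (intro mult_right_mono) auto
    hence "real j * p \<le> 1 - p" using mp by linarith
    hence "real j * p * (1-p)^j' \<le> (1-p) * (1-p)^j'"
      using p by (intro mult_right_mono) auto
    thus ?thesis using Suc by (simp add: B_def)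
  qed
  have ins: "{k..<?n} = insert k {Suc k..<?n}" using kn by auto
  have ups: "[k..<?n] = k # [Suc k..<?n]" using kn by (simp add: upt_conv_Cons)
  let ?Q = "Pi_pmf {Suc k..<?n} 0 (Fi p)"
  let ?S = "{f. wins ?n (mg u k f) (run d h [k..<?n] (mg u k f))}"
  define T where "T y = measure_pmf.prob ?Q {f. f(k:=y) \<in> ?S}" for y
  have Teq: "T y = measure_pmf.prob ?Q {f. wins ?n (mg (u(k:=y)) (Suc k) f)
      (if d (h @ [(k, y)]) then Some k else run d (h @ [(k,y)]) [Suc k..<?n] (mg (u(k:=y)) (Suc k) f))}" for y
  proof -
    have "mg (u(k:=y)) (Suc k) f k = y" for f by (simp add: mg_def)
    thus ?thesis unfolding T_def ups by (simp add: mg_upd Let_def del: upt_Suc)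
  qed
  have IH: "measure_pmf.prob ?Q {f. wins ?n (mg u' (Suc k) f) (run d h' [Suc k..<?n] (mg u' (Suc k) f))} \<le> B" for u' h'
    using Suc.IH[of "Suc k" u' h'] Suc.prems unfolding B_def by simp
  have T0: "T 0 \<le> B"
  proof (cases "d (h @ [(k, 0)])")
    case True
    have "{f. wins ?n (mg (u(k:=0)) (Suc k) f) (Some k)} = {}"
      by (auto simp: wins_def mg_def)
    thus ?thesis using True B0 by (simp add: Teq)
  next
    case False
    thus ?thesis using IH by (simp add: Teq)
  qed
  have T1: "T (real k + 1) \<le> (1-p)^j"
  proof (cases "d (h @ [(k, real k + 1)])")
    case True
    have sub: "{f. wins ?n (mg (u(k:=real k + 1)) (Suc k) f) (Some k)} \<subseteq> {f. \<forall>i\<in>{Suc k..<?n}. f i < real k + 1}"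
      by (auto simp: wins_def mg_def)
    have "measure_pmf.prob ?Q {f. \<forall>i\<in>{Suc k..<?n}. f i < real k + 1} = (1-p)^(?n - Suc k)"
      using p by (intro allbelow) auto
    also have "?n - Suc k = j" using Suc.prems by simp
    finally show ?thesis using True measure_pmf.finite_measure_mono[OF sub, of ?Q] by (simp add: Teq)
  next
    case False
    thus ?thesis using IH[of "u(k:=real k + 1)" "h @ [(k, real k + 1)]"] Bl by (simp add: Teq del: upt_Suc)
  qed
  have "measure_pmf.prob (Pi_pmf {k..<?n} 0 (Fi p)) ?S = p * T (real k + 1) + (1-p) * T 0"
    unfolding ins T_def by (rule peel) (use p k0 in \<open>auto simp: Fi_pos\<close>)
  also have "\<dots> \<le> p * (1-p)^j + (1-p) * B"
    using T0 T1 p by (intro add_mono mult_left_mono) auto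
  also have "(1-p) * B = real j * p * (1-p)^j"
    unfolding B_def by (cases j) auto
  also have "p * (1-p)^j + real j * p * (1-p)^j = real (Suc j) * p * (1-p)^(Suc j - 1)"
    by (simp add: algebra_simps)
  finally show ?case .
qed



lemma top_Pi: "Pi_pmf {0..<Suc m} 0 (Fi p) = map_pmf (\<lambda>f. f(0:=1)) (Pi_pmf {1..<Suc m} 0 (Fi p))"
proof -
  have ins: "{0..<Suc m} = insert 0 {1..<Suc m}" by auto
  show ?thesis unfolding ins
    by (subst Pi_pmf_insert') (auto simp: Fi_def bind_return_pmf map_pmf_def)
qed

lemma prob_top: "measure_pmf.prob (Pi_pmf {0..<Suc m} 0 (Fi p)) S
   = measure_pmf.prob (Pi_pmf {1..<Suc m} 0 (Fi p)) {f. f(0:=1) \<in> S}"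
  by (simp add: top_Pi vimage_def)

lemma Zprob:
  assumes "0 \<le> p" "p \<le> 1"
  shows "measure_pmf.prob (Pi_pmf {1..<Suc m} 0 (Fi p)) {f. wins (Suc m) (f(0:=1)) (Some 0)} = (1-p)^m"
proof -
  have "{f. wins (Suc m) (f(0:=1)) (Some 0)} = {f. \<forall>j\<in>{1..<Suc m}. f j < 1}"
    by (auto simp: wins_def)
  thus ?thesis using allbelow[of p 1 1 "Suc m"] assms by simp
qed

definition d1 :: "(nat \<times> real) list \<Rightarrow> bool" where "d1 h = (1 < snd (last h))"

lemma desc:
  "(\<forall>j\<in>{1..k}. v j = 0 \<or> v j = real j + 1) \<Longrightarrow> (\<exists>j\<in>{1..k}. v j \<noteq> 0) \<Longrightarrow>
   \<exists>i. run d1 h (rev [1..<Suc k]) v = Some i \<and> 1 \<le> i \<and> i \<le> k \<and> v i = real i + 1 \<and> (\<forall>j. i < j \<and> j \<le> k \<longrightarrow> v j = 0)"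
proof (induction k arbitrary: h)
  case 0 thus ?case by auto
next
  case (Suc k)
  have r: "rev [1..<Suc (Suc k)] = Suc k # rev [1..<Suc k]" by simp
  show ?case
  proof (cases "v (Suc k) = 0")
    case False
    hence "v (Suc k) = real (Suc k) + 1" using Suc.prems(1) by auto
    thus ?thesis unfolding r by (auto simp: d1_def Let_def)
  next
    case True
    have "\<exists>j\<in>{1..k}. v j \<noteq> 0" using Suc.prems(2) True by (metis atLeastAtMost_iff le_Suc_eq)
    moreover have "\<forall>j\<in>{1..k}. v j = 0 \<or> v j = real j + 1" using Suc.prems(1) by auto
    ultimately obtain i where i: "run d1 (h @ [(Suc k, v (Suc k))]) (rev [1..<Suc k]) v = Some i"
       "1 \<le> i" "i \<le> k" "v i = real i + 1" "\<forall>j. i < j \<and> j \<le> k \<longrightarrow> v j = 0"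
      using Suc.IH by blast
    have "run d1 h (rev [1..<Suc (Suc k)]) v = Some i"
      unfolding r using i(1) True by (simp add: d1_def Let_def del: upt_Suc)
    moreover have "\<forall>j. i < j \<and> j \<le> Suc k \<longrightarrow> v j = 0" using i(5) True le_Suc_eq by blast
    ultimately show ?thesis using i by auto
  qed
qed

lemma supp_Fi: "set_pmf (Fi p j) \<subseteq> (if j = 0 then {1} else {0, real j + 1})"
  by (auto simp: Fi_def)

lemma supp_Q:
  assumes "f \<in> set_pmf (Pi_pmf {1..<Suc m} 0 (Fi p))" "j \<in> {1..<Suc m}"
  shows "f j = 0 \<or> f j = real j + 1"
proof -
  have "f \<in> PiE_dflt {1..<Suc m} 0 (set_pmf \<circ> Fi p)"
    using set_Pi_pmf_subset'[of "{1..<Suc m}" 0 "Fi p"] assms(1) by auto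
  hence "f j \<in> set_pmf (Fi p j)" using assms(2) by (auto simp: PiE_dflt_def)
  thus ?thesis using supp_Fi[of p j] assms(2) by auto
qed

lemma opt1_lower:
  assumes "0 \<le> p" "p \<le> 1"
  shows "1 - (1-p)^m \<le> measure_pmf.prob (Pi_pmf {1..<Suc m} 0 (Fi p))
      {f. wins (Suc m) (f(0:=1)) (run d1 [(0,1)] (rev [1..<Suc m]) (f(0:=1)))}"
proof -
  let ?Q = "Pi_pmf {1..<Suc m} 0 (Fi p)"
  let ?W = "{f. wins (Suc m) (f(0:=1)) (run d1 [(0,1)] (rev [1..<Suc m]) (f(0:=1)))}"
  let ?Z = "{f. \<forall>j\<in>{1..<Suc m}. f j < 1}"
  have sub: "set_pmf ?Q \<subseteq> ?W \<union> ?Z"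
  proof
    fix f assume f: "f \<in> set_pmf ?Q"
    show "f \<in> ?W \<union> ?Z"
    proof (cases "f \<in> ?Z")
      case False
      define v where "v = f(0:=1)"
      have vs: "\<forall>j\<in>{1..m}. v j = 0 \<or> v j = real j + 1" using supp_Q[OF f] by (auto simp: v_def)
      obtain j where j: "j \<in> {1..<Suc m}" "\<not> f j < 1" using False by auto
      have "\<exists>j\<in>{1..m}. v j \<noteq> 0" using j by (auto simp: v_def intro!: bexI[of _ j])
      then obtain i where i: "run d1 [(0,1)] (rev [1..<Suc m]) v = Some i" "1 \<le> i" "i \<le> m"
          "v i = real i + 1" "\<forall>j. i < j \<and> j \<le> m \<longrightarrow> v j = 0"
        using desc[OF vs] by blast
      have "wins (Suc m) v (Some i)"
        unfolding wins_def
      proof (simp, intro conjI ballI impI)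
        show "0 < v i" using i by simp
      next
        fix j assume j: "j \<in> {0..<Suc m}" "j \<noteq> i"
        show "v j < v i"
        proof (cases "j = 0")
          case True thus ?thesis using i by (simp add: v_def)
        next
          case False
          hence "v j = 0 \<or> v j = real j + 1" using vs j by auto
          moreover have "i < j \<longrightarrow> v j = 0" using i j by auto
          ultimately show ?thesis using i j by (cases "i < j") auto
        qed
      qed
      thus ?thesis using i(1) by (simp add: v_def)
    qed auto
  qed
  have "1 = measure_pmf.prob ?Q (set_pmf ?Q)"
    using measure_Int_set_pmf[of ?Q UNIV] by simp
  also have "\<dots> \<le> measure_pmf.prob ?Q (?W \<union> ?Z)"
    using sub by (rule measure_pmf.finite_measure_mono) simp
  also have "\<dots> \<le> measure_pmf.prob ?Q ?W + measure_pmf.prob ?Q ?Z"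
    by (rule measure_subadditive) auto
  also have "measure_pmf.prob ?Q ?Z = (1-p)^m"
    using allbelow[of p 1 1 "Suc m"] assms by simp
  finally show ?thesis by linarith
qed

lemma OPT_ge: "win_prob n F \<pi> d \<le> OPT n F \<pi>"
  unfolding OPT_def
  by (rule cSup_upper) (auto simp: win_prob_def bdd_above_def intro!: exI[of _ 1])



lemma wp_top: "win_prob (Suc m) (Fi p) (0 # xs) d = measure_pmf.prob (Pi_pmf {1..<Suc m} 0 (Fi p))
   {f. wins (Suc m) (f(0:=1)) (if d [(0,1)] then Some 0 else run d [(0,1)] xs (f(0:=1)))}"
  unfolding win_prob_def prob_top by (simp add: Let_def)

theorem theorem4p2:
  fixes A :: unaware_alg and \<delta> :: real
  assumes "\<delta> > 0"
  shows "\<exists>n F \<pi>. valid_instance n F \<and> arrival_order n \<pi> \<and> OPT n F \<pi> > 0 \<and>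
           ALG A n F \<pi> \<le> (ln (1 / lam) + \<delta>) * OPT n F \<pi>"
proof -
  define c where "c = ln (1/lam)"
  have lf: "0 < lam" "lam < 1/2" "lam / (1 - lam) = c" using lam_facts c_def by auto
  have c0: "0 < c"
  proof -
    have "0 < lam / (1 - lam)" using lf by (intro divide_pos_pos) auto
    thus ?thesis using lf by simp
  qed
  have c1: "c < 1"
  proof -
    have "lam / (1 - lam) < 1" using lf by (subst divide_less_eq) auto
    thus ?thesis using lf by simp
  qed
  have lamc: "lam * (1 + c) = c"
  proof -
    have "c * (1 - lam) = lam" using lf by (simp add: field_simps)
    thus ?thesis by (simp add: algebra_simps)
  qed
  have elam: "exp (- c) = lam" using lf unfolding c_def by (simp add: ln_div)
  define \<delta>' where "\<delta>' = min \<delta> ((1-c)/2)"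
  have d0: "0 < \<delta>'" "\<delta>' \<le> \<delta>" "\<delta>' \<le> (1-c)/2" using assms c1 by (auto simp: \<delta>'_def min_def)
  obtain N :: nat where N: "3 / \<delta>' + 2 < real N" using reals_Archimedean2 by blast
  have N2: "2 < real N" using N d0 by (smt (verit) divide_pos_pos)
  have NN: "3 \<le> \<delta>' * real N"
  proof -
    have "3 / \<delta>' \<le> real N" using N by linarith
    thus ?thesis using d0 by (simp add: divide_le_eq mult.commute)
  qed
  define p where "p = 1 / real N"
  define m where "m = nat \<lceil>c * real N\<rceil>"
  have cN0: "0 < c * real N" using c0 N2 by simp
  have mge: "c * real N \<le> real m" unfolding m_def using cN0
    by (metis le_of_int_ceiling less_le_not_le of_int_0_le_iff of_nat_nat order_trans ceiling_le_zero not_le)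
  have mlt: "real m < c * real N + 1" unfolding m_def using cN0
    by (smt (verit, best) ceiling_correct of_nat_nat ceiling_le_zero)
  have m1: "1 \<le> m" using mge cN0 by (metis less_le_trans not_less of_nat_0 less_one)
  have p0: "0 < p" "p < 1" using N2 unfolding p_def by auto
  have mp_ge: "c \<le> real m * p" using mge N2 unfolding p_def by (simp add: field_simps)
  have mp_le: "real m * p \<le> (c + \<delta>') * (1 - p)"
  proof -
    have "c * real N + 1 \<le> (c + \<delta>') * (real N - 1)"
      using NN c1 d0 by (simp add: algebra_simps)
    hence "real m \<le> (c + \<delta>') * (real N - 1)" using mlt by linarith
    hence "real m / real N \<le> (c + \<delta>') * (real N - 1) / real N" using N2 by (simp add: divide_right_mono)
    moreover have "(c + \<delta>') * (real N - 1) / real N = (c + \<delta>') * (1 - p)"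
      using N2 unfolding p_def by (simp add: field_simps)
    ultimately show ?thesis unfolding p_def by simp
  qed
  have oc: "real m * p \<le> 1 - p"
  proof -
    have "(c + \<delta>') * (1 - p) \<le> 1 * (1 - p)" using d0 c1 p0 by (intro mult_right_mono) auto
    thus ?thesis using mp_le by simp
  qed
  define \<theta> where "\<theta> = (1 - p) ^ m"
  have th0: "0 < \<theta>" using p0 unfolding \<theta>_def by simp
  have thlam: "\<theta> \<le> lam"
  proof -
    have "(1 - p) ^ m \<le> exp (- p) ^ m"
      using p0 exp_ge_add_one_self[of "- p"] by (intro power_mono) auto
    also have "\<dots> = exp (- (real m * p))" by (simp add: exp_of_nat_mult[symmetric])
    also have "\<dots> \<le> exp (- c)" using mp_ge by simp
    finally show ?thesis unfolding \<theta>_def elam .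
  qed
  have thc: "\<theta> \<le> c * (1 - \<theta>)"
  proof -
    have "\<theta> * (1 + c) \<le> lam * (1 + c)" using thlam c0 by (intro mult_right_mono) auto
    thus ?thesis using lamc by (simp add: algebra_simps)
  qed
  let ?n = "Suc m" and ?F = "Fi p"
  have valid: "valid_instance ?n ?F"
    unfolding valid_instance_def
  proof (intro allI impI)
    fix i assume "i < ?n"
    show "set_pmf (Fi p i) \<subseteq> {0..}"
      using supp_Fi[of p i] by (cases "i = 0") auto
  qed
  have Z: "measure_pmf.prob (Pi_pmf {1..<Suc m} 0 (Fi p)) {f. wins (Suc m) (f(0:=1)) (Some 0)} = \<theta>"
    using Zprob[of p m] p0 unfolding \<theta>_def by simp
  show ?thesis
  proof (cases "A ?n ?F [(0,1)]")
    case True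
    define \<pi> where "\<pi> = 0 # rev [1..<Suc m]"
    have ao: "arrival_order ?n \<pi>" unfolding arrival_order_def \<pi>_def by auto
    have alg: "ALG A ?n ?F \<pi> = \<theta>"
      unfolding ALG_def \<pi>_def wp_top using True Z by simp
    have "1 - \<theta> \<le> win_prob ?n ?F \<pi> d1"
      unfolding \<pi>_def wp_top using opt1_lower[of p m] p0 by (simp add: d1_def \<theta>_def)
    hence opt: "1 - \<theta> \<le> OPT ?n ?F \<pi>" using OPT_ge[of ?n ?F \<pi> d1] by linarith
    have th1: "\<theta> < 1" using thlam lf by simp
    have "ALG A ?n ?F \<pi> \<le> c * (1 - \<theta>)" using alg thc by simp
    also have "\<dots> \<le> (c + \<delta>) * OPT ?n ?F \<pi>"
      using opt c0 assms th1 by (intro mult_mono) auto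
    finally show ?thesis using valid ao opt th1 unfolding c_def by (intro exI[of _ ?n] exI[of _ ?F] exI[of _ \<pi>]) auto
  next
    case False
    define \<pi> where "\<pi> = 0 # [1..<Suc m]"
    have ao: "arrival_order ?n \<pi>" unfolding arrival_order_def \<pi>_def by auto
    have mgeq: "mg (\<lambda>_. 1) 1 f = f(0:=1)" for f by (auto simp: mg_def fun_eq_iff)
    have "ALG A ?n ?F \<pi> = measure_pmf.prob (Pi_pmf {1..<Suc m} 0 (Fi p))
      {f. wins (Suc m) (mg (\<lambda>_. 1) 1 f) (run (A ?n ?F) [(0,1)] [1..<Suc m] (mg (\<lambda>_. 1) 1 f))}"
      unfolding ALG_def \<pi>_def wp_top mgeq using False by simp
    also have "\<dots> \<le> real m * p * (1-p)^(m-1)"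
      using odds[of p m m 1 "\<lambda>_. 1" "A ?n ?F" "[(0,1)]"] p0 oc by simp
    finally have alg: "ALG A ?n ?F \<pi> \<le> real m * p * (1-p)^(m-1)" .
    have "\<theta> \<le> win_prob ?n ?F \<pi> (\<lambda>_. True)"
      unfolding \<pi>_def wp_top using Z by simp
    hence opt: "\<theta> \<le> OPT ?n ?F \<pi>" using OPT_ge[of ?n ?F \<pi> "\<lambda>_. True"] by linarith
    have eqt: "real m * p * (1-p)^(m-1) * (1 - p) = real m * p * \<theta>"
      using m1 unfolding \<theta>_def by (cases m) auto
    have "real m * p * \<theta> \<le> (c + \<delta>') * (1 - p) * \<theta>" using mp_le th0 by (intro mult_right_mono) auto
    hence "real m * p * (1-p)^(m-1) * (1 - p) \<le> ((c + \<delta>') * \<theta>) * (1 - p)"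
      using eqt by (simp add: algebra_simps)
    hence "real m * p * (1-p)^(m-1) \<le> (c + \<delta>') * \<theta>" using p0 by simp
    also have "\<dots> \<le> (c + \<delta>) * OPT ?n ?F \<pi>"
      using opt d0 c0 th0 by (intro mult_mono) auto
    finally have "ALG A ?n ?F \<pi> \<le> (c + \<delta>) * OPT ?n ?F \<pi>" using alg by linarith
    thus ?thesis using valid ao opt th0 unfolding c_def by (intro exI[of _ ?n] exI[of _ ?F] exI[of _ \<pi>]) auto
  qed
qed


end
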